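(* Let $d\ge1$, $N\in\mathbb{N}$, $\alpha,\beta>0$ and $p>1/2$. Let $\mathcal{D}^{\rm te}$ be a distribution on $\mathbb{R}^d\times\{\pm1\}$ with $y\sim U(\{\pm1\})$, having one robust coordinate $r\in[d]$ and $d-1$ non-robust coordinates (all others), no irrelevant coordinates, such that $yx_r=\alpha$ with probability $p$ and $yx_r=-\alpha$ with probability $1-p$, and $yx_i=\beta$ with probability one for every $i\ne r$. For the query $(\bm x_{N+1},y_{N+1})$, let $\bm Z$ be formed with $\bm\Delta=\bm 0$ and define $$\tilde f(\bm P,\bm Q):=\mathbb{E}_{\{(\bm x_n,y_n)\}_{n=1}^{N}\overset{\text{i.i.d.}}{\sim}\mathcal{D}^{\rm te}}\big[y_{N+1}[f(\bm Z;\bm P,\bm Q)]_{d+1,N+1}\big],$$ a random variable depending on the query. Let $\bm P^{\rm std}=\bm P^{\rm adv}:=\begin{bmatrix}\bm 0_{d,d+1}\\ \bm 1_{d+1}^\top\end{bmatrix}$, $\bm Q^{\rm std}:=\begin{bmatrix}\bm 1_{d+1,d}&\bm 0_{d+1}\end{bmatrix}$, $\bm Q^{\rm adv}:=\begin{bmatrix}\bm I_d&\bm 0_d\\ \bm 0_d^\top&0\end{bmatrix}$. Then there exist strictly positive quantities $g_1,g_2>0$ depending only on $d,\alpha,\beta,p$ such that: $\tilde f(\bm P^{\rm std},\bm Q^{\rm std})=g_1(\alpha+(d-1)\beta)$ on the event $y_{N+1}x_{N+1,r}=\alpha$ (probability $p$), and $\tilde f(\bm P^{\rm std},\bm Q^{\rm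 std})=g_1(-\alpha+(d-1)\beta)$ on the event $y_{N+1}x_{N+1,r}=-\alpha$ (probability $1-p$); and $\tilde f(\bm P^{\rm adv},\bm Q^{\rm adv})\le g_2\{-(2p-1)\alpha^2+(d-1)\beta^2\}$ on the event $y_{N+1}x_{N+1,r}=-\alpha$ (probability $1-p$).
   Context: $[n]:=\{1,\dots,n\}$; $U(\mathcal S)$ is the uniform distribution on $\mathcal S$; $\bm 1_a,\bm 1_{a,b},\bm 0_a,\bm 0_{a,b},\bm I_a$ denote all-ones/all-zeros vectors and matrices and the identity. Transformer: given demonstrations $(\bm x_1,y_1),\dots,(\bm x_N,y_N)$, a query $\bm x_{N+1}\in\mathbb{R}^d$ and a perturbation $\bm\Delta\in\mathbb{R}^d$, let $\bm Z\in\mathbb{R}^{(d+1)\times(N+1)}$ have $n$-th column $(\bm x_n^\top,y_n)^\top$ for $n\le N$ and last column $((\bm x_{N+1}+\bm\Delta)^\top,0)^\top$. Let $\bm M:=\begin{bmatrix}\bm I_N&0\\0&0\end{bmatrix}$ and $f(\bm Z;\bm P,\bm Q):=\frac1N\bm P\bm Z\bm M\bm Z^\top\bm Q\bm Z$; $[\cdot]_{d+1,N+1}$ is the $(d+1,N+1)$ entry. Demonstrations and query are i.i.d. from $\mathcal{D}^{\rm te}$. *)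

theory Defs
  imports "HOL-Probability.Product_PMF" "Jordan_Normal_Form.Matrix"
begin

(* Indices are 0-based: rows 0..d (row d = label row), columns 0..N (column N = query). *)

definition Zmat :: "nat \<Rightarrow> nat \<Rightarrow> (nat \<Rightarrow> real Matrix.vec \<times> real) \<Rightarrow> real Matrix.vec \<Rightarrow> real Matrix.vec \<Rightarrow> real mat" where
  "Zmat d N S xq \<Delta> = mat (d+1) (N+1) (\<lambda>(i,j).
     if j < N then (if i < d then vec_index (fst (S j)) i else snd (S j))
     else (if i < d then vec_index xq i + vec_index \<Delta> i else 0))"

definition Mmat :: "nat \<Rightarrow> real mat" where
  "Mmat N = mat (N+1) (N+1) (\<lambda>(i,j). if i = j \<and> i < N then 1 else 0)"

definition ftf :: "nat \<Rightarrow> real mat \<Rightarrow> real mat \<Rightarrow> real mat \<Rightarrow> real mat" where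
  "ftf N Z P Q = (1 / real N) \<cdot>\<^sub>m (P * Z * Mmat N * transpose_mat Z * Q * Z)"

definition Pstd :: "nat \<Rightarrow> real mat" where
  "Pstd d = mat (d+1) (d+1) (\<lambda>(i,j). if i = d then 1 else 0)"

definition Padv :: "nat \<Rightarrow> real mat" where
  "Padv d = Pstd d"

definition Qstd :: "nat \<Rightarrow> real mat" where
  "Qstd d = mat (d+1) (d+1) (\<lambda>(i,j). if j < d then 1 else 0)"

definition Qadv :: "nat \<Rightarrow> real mat" where
  "Qadv d = mat (d+1) (d+1) (\<lambda>(i,j). if i = j \<and> i < d then 1 else 0)"

definition ftilde :: "nat \<Rightarrow> nat \<Rightarrow> (real Matrix.vec \<times> real) pmf \<Rightarrow> real mat \<Rightarrow> real mat \<Rightarrow> real Matrix.vec \<Rightarrow> real \<Rightarrow> real" where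
  "ftilde d N D P Q xq yq =
     measure_pmf.expectation (Pi_pmf {..<N} undefined (\<lambda>_. D))
       (\<lambda>S. yq * (ftf N (Zmat d N S xq (0\<^sub>v d)) P Q) $$ (d, N))"

end

theory Submission imports Defs begin

lemma mult_entry:
  fixes A B :: "real mat"
  assumes "i < dim_row A" "j < dim_col B" "dim_col A = dim_row B"
  shows "(A*B)$$(i,j) = (\<Sum>k<dim_row B. A$$(i,k)*B$$(k,j))"
  using assms by (auto simp: scalar_prod_def atLeast0LessThan intro!: sum.cong)

declare index_mult_mat(1)[simp del]

lemma entry_general:
  fixes Q :: "real mat" and d N :: nat and S and xq :: "real Matrix.vec"
  assumes Q: "dim_row Q = d+1" "dim_col Q = d+1"
  defines "Z \<equiv> Zmat d N S xq (0\<^sub>v d)"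
  shows "(ftf N Z (Pstd d) Q)$$(d,N) = (1/real N) *
     (\<Sum>j<d+1. (\<Sum>k<d+1. (\<Sum>m<N. (\<Sum>l<d+1. Z$$(l,m)) * Z$$(k,m)) * Q$$(k,j)) * Z$$(j,N))"
proof -
  have dZ: "dim_row Z = d+1" "dim_col Z = N+1" by (simp_all add: Z_def Zmat_def)
  have dM: "dim_row (Mmat N) = N+1" "dim_col (Mmat N) = N+1" by (simp_all add: Mmat_def)
  have dP: "dim_row (Pstd d) = d+1" "dim_col (Pstd d) = d+1" by (simp_all add: Pstd_def)
  have e1: "(Pstd d * Z)$$(d,m) = (\<Sum>l<d+1. Z$$(l,m))" if "m < N+1" for m
    using that by (subst mult_entry) (simp_all add: dZ dP Pstd_def)
  have e2: "(Pstd d * Z * Mmat N)$$(d,m) = (if m < N then (\<Sum>l<d+1. Z$$(l,m)) else 0)" if "m < N+1" for m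
  proof -
    have "(Pstd d * Z * Mmat N)$$(d,m) = (\<Sum>k<N+1. (Pstd d * Z)$$(d,k) * Mmat N $$(k,m))"
      using that by (subst mult_entry) (simp_all add: dZ dP dM)
    also have "\<dots> = (\<Sum>k<N+1. if k = m then (if m < N then (\<Sum>l<d+1. Z$$(l,m)) else 0) else 0)"
      using that by (intro sum.cong) (auto simp: e1 Mmat_def)
    finally show ?thesis using that by simp
  qed
  have e3: "(Pstd d * Z * Mmat N * transpose_mat Z)$$(d,k) = (\<Sum>m<N. (\<Sum>l<d+1. Z$$(l,m)) * Z$$(k,m))" if "k < d+1" for k
  proof -
    have "(Pstd d * Z * Mmat N * transpose_mat Z)$$(d,k) = (\<Sum>m<N+1. (Pstd d * Z * Mmat N)$$(d,m) * Z$$(k,m))"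
      using that by (subst mult_entry) (simp_all add: dZ dP dM)
    also have "\<dots> = (\<Sum>m<N+1. (if m < N then (\<Sum>l<d+1. Z$$(l,m)) * Z$$(k,m) else 0))"
      by (intro sum.cong) (auto simp: e2)
    also have "\<dots> = (\<Sum>m<N. (\<Sum>l<d+1. Z$$(l,m)) * Z$$(k,m))"
      by simp
    finally show ?thesis .
  qed
  have e4: "(Pstd d * Z * Mmat N * transpose_mat Z * Q)$$(d,j) = (\<Sum>k<d+1. (\<Sum>m<N. (\<Sum>l<d+1. Z$$(l,m)) * Z$$(k,m)) * Q$$(k,j))" if "j < d+1" for j
    using that by (subst mult_entry) (simp_all add: dZ dP dM Q e3)
  have e5: "(Pstd d * Z * Mmat N * transpose_mat Z * Q * Z)$$(d,N) = (\<Sum>j<d+1. (\<Sum>k<d+1. (\<Sum>m<N. (\<Sum>l<d+1. Z$$(l,m)) * Z$$(k,m)) * Q$$(k,j)) * Z$$(j,N))"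
    by (subst mult_entry) (simp_all add: dZ dP dM Q e4)
  show ?thesis unfolding ftf_def using e5 by (simp add: dZ dP dM Q)
qed

definition cs :: "nat \<Rightarrow> real Matrix.vec \<times> real \<Rightarrow> real" where
  "cs d z = (\<Sum>i<d. fst z $ i) + snd z"

lemma Zent: "l < d+1 \<Longrightarrow> m < N \<Longrightarrow> Zmat d N S xq (0\<^sub>v d) $$ (l,m) = (if l < d then fst (S m) $ l else snd (S m))"
  by (simp add: Zmat_def)
lemma ZentN: "l < d+1 \<Longrightarrow> Zmat d N S xq (0\<^sub>v d) $$ (l,N) = (if l < d then xq $ l else 0)"
  by (simp add: Zmat_def)
lemma Zcs: "m < N \<Longrightarrow> (\<Sum>l<d+1. Zmat d N S xq (0\<^sub>v d) $$ (l,m)) = cs d (S m)"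
  by (simp add: Zent cs_def)

lemma entry_std:
  "(ftf N (Zmat d N S xq (0\<^sub>v d)) (Pstd d) (Qstd d))$$(d,N) = (1/real N) *
     ((\<Sum>m<N. (cs d (S m))^2) * (\<Sum>j<d. xq $ j))"
proof -
  let ?Z = "Zmat d N S xq (0\<^sub>v d)"
  let ?T = "\<lambda>k. (\<Sum>m<N. (\<Sum>l<d+1. ?Z$$(l,m)) * ?Z$$(k,m))"
  have "(ftf N ?Z (Pstd d) (Qstd d))$$(d,N) = (1/real N) *
     (\<Sum>j<d+1. (\<Sum>k<d+1. ?T k * Qstd d $$(k,j)) * ?Z$$(j,N))"
    by (rule entry_general) (simp_all add: Qstd_def)
  also have "(\<Sum>j<d+1. (\<Sum>k<d+1. ?T k * Qstd d $$(k,j)) * ?Z$$(j,N)) = (\<Sum>j<d. (\<Sum>k<d+1. ?T k) * xq $ j)"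
    by (simp add: Qstd_def ZentN)
  also have "(\<Sum>k<d+1. ?T k) = (\<Sum>m<N. (cs d (S m))^2)"
  proof -
    have "(\<Sum>k<d+1. ?T k) = (\<Sum>m<N. (\<Sum>l<d+1. ?Z$$(l,m)) * (\<Sum>k<d+1. ?Z$$(k,m)))"
      unfolding sum_distrib_left by (rule sum.swap)
    also have "\<dots> = (\<Sum>m<N. (cs d (S m))^2)"
      by (intro sum.cong refl) (simp only: lessThan_iff Zcs power2_eq_square)
    finally show ?thesis .
  qed
  finally show ?thesis by (simp add: sum_distrib_left)
qed

lemma entry_adv:
  "(ftf N (Zmat d N S xq (0\<^sub>v d)) (Padv d) (Qadv d))$$(d,N) = (1/real N) *
     (\<Sum>m<N. cs d (S m) * (\<Sum>j<d. fst (S m) $ j * xq $ j))"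
proof -
  let ?Z = "Zmat d N S xq (0\<^sub>v d)"
  let ?T = "\<lambda>k. (\<Sum>m<N. (\<Sum>l<d+1. ?Z$$(l,m)) * ?Z$$(k,m))"
  have "(ftf N ?Z (Pstd d) (Qadv d))$$(d,N) = (1/real N) *
     (\<Sum>j<d+1. (\<Sum>k<d+1. ?T k * Qadv d $$(k,j)) * ?Z$$(j,N))"
    by (rule entry_general) (simp_all add: Qadv_def)
  also have "(\<Sum>j<d+1. (\<Sum>k<d+1. ?T k * Qadv d $$(k,j)) * ?Z$$(j,N)) = (\<Sum>j<d. ?T j * xq $ j)"
  proof -
    have "(\<Sum>j<d+1. (\<Sum>k<d+1. ?T k * Qadv d $$(k,j)) * ?Z$$(j,N)) = (\<Sum>j<d+1. (if j < d then ?T j else 0) * ?Z$$(j,N))"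
    proof (intro sum.cong refl)
      fix j assume j: "j \<in> {..<d+1}"
      have "(\<Sum>k<d+1. ?T k * Qadv d $$(k,j)) = (\<Sum>k<d+1. if k = j then (if j < d then ?T j else 0) else 0)"
        using j by (intro sum.cong) (auto simp: Qadv_def)
      also have "\<dots> = (if j < d then ?T j else 0)" using j by simp
      finally show "(\<Sum>k<d+1. ?T k * Qadv d $$(k,j)) * ?Z$$(j,N) = (if j < d then ?T j else 0) * ?Z$$(j,N)" by simp
    qed
    also have "\<dots> = (\<Sum>j<d. ?T j * xq $ j)"
      by (simp add: ZentN)
    finally show ?thesis .
  qed
  also have "(\<Sum>j<d. ?T j * xq $ j) = (\<Sum>m<N. cs d (S m) * (\<Sum>j<d. fst (S m) $ j * xq $ j))"
  proof -
    have "(\<Sum>j<d. ?T j * xq $ j) = (\<Sum>m<N. \<Sum>j<d. (\<Sum>l<d+1. ?Z$$(l,m)) * ?Z$$(j,m) * xq $ j)"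
      by (simp add: sum_distrib_right sum.swap[of _ "{..<d}"])
    also have "\<dots> = (\<Sum>m<N. cs d (S m) * (\<Sum>j<d. fst (S m) $ j * xq $ j))"
      by (intro sum.cong refl) (simp add: Zent cs_def sum_distrib_left mult.assoc)
    finally show ?thesis .
  qed
  finally show ?thesis by (simp add: Padv_def)
qed

lemma expect_two:
  fixes D :: "'a pmf" and s h :: "'a \<Rightarrow> real"
  assumes ne: "a1 \<noteq> a2"
    and p1: "measure_pmf.prob D {z. s z = a1} = p1"
    and p2: "measure_pmf.prob D {z. s z = a2} = p2"
    and sum1: "p1 + p2 = 1"
    and h: "\<And>z. z \<in> set_pmf D \<Longrightarrow> s z = a1 \<Longrightarrow> h z = c1"
    and h2: "\<And>z. z \<in> set_pmf D \<Longrightarrow> s z = a2 \<Longrightarrow> h z = c2"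
  shows "integrable (measure_pmf D) h \<and> measure_pmf.expectation D h = c1 * p1 + c2 * p2"
proof -
  let ?A = "{z. s z = a1}" and ?B = "{z. s z = a2}"
  have disj: "?A \<inter> ?B = {}" using ne by auto
  have "measure_pmf.prob D (?A \<union> ?B) = 1"
    using measure_pmf.finite_measure_Union[of ?A D ?B] disj p1 p2 sum1 by simp
  hence "measure_pmf.prob D (UNIV - (?A \<union> ?B)) = 0"
    using measure_pmf.prob_compl[of "?A \<union> ?B" D] by simp
  hence supp: "\<And>z. z \<in> set_pmf D \<Longrightarrow> s z = a1 \<or> s z = a2"
    unfolding measure_pmf_zero_iff by blast
  have ae: "AE z in measure_pmf D. h z = c1 * indicator ?A z + c2 * indicator ?B z"
    by (rule AE_pmfI) (use supp h h2 ne in \<open>auto simp: indicator_def\<close>)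
  have int2: "integrable (measure_pmf D) (\<lambda>z. c1 * indicator ?A z + c2 * indicator ?B z)"
    by (rule measure_pmf.integrable_const_bound[where B="\<bar>c1\<bar> + \<bar>c2\<bar>"])
       (auto simp: indicator_def)
  have int: "integrable (measure_pmf D) h"
    using integrable_cong_AE[OF _ _ ae] int2 by simp
  have "measure_pmf.expectation D h = measure_pmf.expectation D (\<lambda>z. c1 * indicator ?A z + c2 * indicator ?B z)"
    by (rule integral_cong_AE) (use ae in auto)
  also have "\<dots> = c1 * p1 + c2 * p2"
    using p1 p2 by (simp add: Bochner_Integration.integral_add measure_pmf.emeasure_eq_measure)
  finally show ?thesis using int by simp
qed

lemma expect_Pi:
  fixes D :: "'a pmf" and h :: "'a \<Rightarrow> real"
  assumes int: "integrable (measure_pmf D) h" and N: "N \<ge> 1"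
  shows "measure_pmf.expectation (Pi_pmf {..<N} dflt (\<lambda>_. D)) (\<lambda>S. c * (1 / real N * (\<Sum>m<N. h (S m))))
         = c * measure_pmf.expectation D h"
proof -
  let ?P = "Pi_pmf {..<N} dflt (\<lambda>_. D)"
  have comp: "map_pmf (\<lambda>S. S m) ?P = D" if "m < N" for m
    using that by (simp add: Pi_pmf_component)
  have intm: "integrable (measure_pmf ?P) (\<lambda>S. h (S m))" if "m < N" for m
  proof -
    have "integrable (measure_pmf (map_pmf (\<lambda>S. S m) ?P)) h" using comp[OF that] int by simp
    thus ?thesis by simp
  qed
  have em: "measure_pmf.expectation ?P (\<lambda>S. h (S m)) = measure_pmf.expectation D h" if "m < N" for m
  proof -
    have "measure_pmf.expectation ?P (\<lambda>S. h (S m)) = measure_pmf.expectation (map_pmf (\<lambda>S. S m) ?P) h" by simp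
    thus ?thesis using comp[OF that] by simp
  qed
  have "measure_pmf.expectation ?P (\<lambda>S. c * (1 / real N * (\<Sum>m<N. h (S m))))
      = c * (1 / real N * (\<Sum>m<N. measure_pmf.expectation ?P (\<lambda>S. h (S m))))"
    using intm by (simp add: Bochner_Integration.integral_sum)
  also have "\<dots> = c * (1 / real N * (\<Sum>m<N. measure_pmf.expectation D h))"
    using em by simp
  also have "\<dots> = c * measure_pmf.expectation D h" using N by simp
  finally show ?thesis .
qed

lemma sq1: "(y::real) \<in> {-1,1} \<Longrightarrow> y * y = 1" by auto

lemma comp_nr:
  fixes x :: "real Matrix.vec"
  assumes "(y::real) \<in> {-1,1}" "y * x $ i = \<beta>"
  shows "x $ i = y * \<beta>"
proof -
  have "x $ i = (y*y) * x $ i" using sq1[OF assms(1)] by simp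
  also have "\<dots> = y * \<beta>" using assms(2) by (simp add: mult.assoc)
  finally show ?thesis .
qed

lemma comp_r:
  fixes x :: "real Matrix.vec"
  assumes "(y::real) \<in> {-1,1}"
  shows "x $ r = y * (y * x $ r)"
  using sq1[OF assms] by (simp add: mult.assoc[symmetric])

lemma sum_split_r:
  fixes f :: "nat \<Rightarrow> real"
  assumes "r < d" "\<And>i. i < d \<Longrightarrow> i \<noteq> r \<Longrightarrow> f i = c"
  shows "(\<Sum>i<d. f i) = f r + real (d - 1) * c"
proof -
  have "(\<Sum>i<d. f i) = f r + (\<Sum>i\<in>{..<d} - {r}. f i)"
    using assms(1) by (simp add: sum.remove)
  also have "(\<Sum>i\<in>{..<d} - {r}. f i) = (\<Sum>i\<in>{..<d} - {r}. c)"
    using assms(2) by (intro sum.cong) auto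
  also have "\<dots> = real (d - 1) * c" using assms(1) by simp
  finally show ?thesis .
qed

lemma sumx:
  fixes x :: "real Matrix.vec"
  assumes "r < d" "y \<in> {-1,1}" "\<forall>i<d. i \<noteq> r \<longrightarrow> y * x $ i = \<beta>"
  shows "(\<Sum>i<d. x $ i) = y * (y * x $ r + real (d - 1) * \<beta>)"
proof -
  have "(\<Sum>i<d. x $ i) = x $ r + real (d - 1) * (y * \<beta>)"
  proof (rule sum_split_r)
    fix i assume i: "i < d" "i \<noteq> r"
    show "x $ i = y * \<beta>" using assms i by (intro comp_nr) auto
  qed (use assms in simp)
  also have "\<dots> = y * (y * x $ r + real (d - 1) * \<beta>)"
    using comp_r[OF assms(2), of x r] by (simp add: algebra_simps)
  finally show ?thesis .
qed

lemma sumxx: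
  fixes x xq :: "real Matrix.vec"
  assumes "r < d" "y \<in> {-1,1}" "\<forall>i<d. i \<noteq> r \<longrightarrow> y * x $ i = \<beta>"
     "yq \<in> {-1,1}" "\<forall>i<d. i \<noteq> r \<longrightarrow> yq * xq $ i = \<beta>"
  shows "(\<Sum>i<d. x $ i * xq $ i) = y * yq * ((y * x $ r) * (yq * xq $ r) + real (d - 1) * \<beta>^2)"
proof -
  have "(\<Sum>i<d. x $ i * xq $ i) = x $ r * xq $ r + real (d - 1) * ((y * \<beta>) * (yq * \<beta>))"
  proof (rule sum_split_r)
    fix i assume i: "i < d" "i \<noteq> r"
    have "x $ i = y * \<beta>" using assms i by (intro comp_nr) auto
    moreover have "xq $ i = yq * \<beta>" using assms i by (intro comp_nr) auto
    ultimately show "x $ i * xq $ i = (y * \<beta>) * (yq * \<beta>)" by simp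
  qed (use assms in simp)
  also have "\<dots> = y * yq * ((y * x $ r) * (yq * xq $ r) + real (d - 1) * \<beta>^2)"
  proof -
    have e: "y * yq * ((y * x $ r) * (yq * xq $ r) + real (d - 1) * \<beta>^2)
       = (y*y)*(yq*yq)*(x $ r * xq $ r) + real (d - 1) * ((y * \<beta>) * (yq * \<beta>))"
      by (simp add: algebra_simps power2_eq_square)
    show ?thesis unfolding e using sq1[OF assms(2)] sq1[OF assms(4)] by simp
  qed
  finally show ?thesis .
qed

lemma ineq_part:
  fixes \<alpha> K C p L R :: real
  assumes a: "\<alpha> > 0" and K: "K \<ge> 0" and C: "C > 0" and p: "1/2 < p" "p \<le> 1"
    and R: "R = -(2*p - 1) * \<alpha>^2 + K"
    and L: "L = (\<alpha> + C) * (K - \<alpha>^2) * p + (-\<alpha> + C) * (\<alpha>^2 + K) * (1 - p)"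
  shows "L \<le> (if R > 0 then (\<bar>L\<bar> + 1) / R else if R < 0 \<and> L < 0 then L / R else 1) * R"
proof -
  have id: "L = C * R + \<alpha> * ((2*p - 1) * K - \<alpha>^2)"
    unfolding L R by (simp add: algebra_simps power2_eq_square)
  have q: "0 < 2*p - 1" "2*p - 1 \<le> 1" using p by auto
  have a2: "\<alpha>^2 > 0" using a by simp
  show ?thesis
  proof (cases "R > 0")
    case True thus ?thesis by simp
  next
    case False
    hence K': "K \<le> (2*p-1) * \<alpha>^2" unfolding R by (simp add: algebra_simps)
    have "(2*p-1) * K \<le> (2*p-1) * ((2*p-1) * \<alpha>^2)" using K' q by (intro mult_left_mono) auto
    also have "\<dots> \<le> 1 * (1 * \<alpha>^2)" using q a2
      by (intro mult_mono) (auto intro: mult_right_le_one_le)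
    finally have t: "(2*p-1) * K - \<alpha>^2 \<le> 0" by simp
    have t2: "\<alpha> * ((2*p - 1) * K - \<alpha>^2) \<le> 0" using t a by (simp add: mult_nonneg_nonpos)
    show ?thesis
    proof (cases "R < 0")
      case True
      have "C * R < 0" using True C by (simp add: mult_pos_neg)
      hence "L < 0" using id t2 by simp
      thus ?thesis using True by simp
    next
      case F2: False
      hence "R = 0" using False by simp
      thus ?thesis using id t2 by simp
    qed
  qed
qed

theorem theorem3p5:
  fixes d :: nat and \<alpha> \<beta> p :: real
  assumes "d \<ge> 1" and "\<alpha> > 0" and "\<beta> > 0" and "p > 1/2"
  shows "\<exists>g1 g2. g1 > 0 \<and> g2 > 0 \<and>
    (\<forall>(N::nat) (D :: (real Matrix.vec \<times> real) pmf) (r::nat).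
       N \<ge> 1 \<longrightarrow> r < d \<longrightarrow>
       (\<forall>(x,y)\<in>set_pmf D. dim_vec x = d \<and> y \<in> {-1, 1}) \<longrightarrow>
       measure_pmf.prob D {z. snd z = 1} = 1/2 \<longrightarrow>
       measure_pmf.prob D {z. snd z * vec_index (fst z) r = \<alpha>} = p \<longrightarrow>
       measure_pmf.prob D {z. snd z * vec_index (fst z) r = -\<alpha>} = 1 - p \<longrightarrow>
       (\<forall>(x,y)\<in>set_pmf D. \<forall>i<d. i \<noteq> r \<longrightarrow> y * vec_index x i = \<beta>) \<longrightarrow>
       (\<forall>(xq,yq)\<in>set_pmf D.
          (yq * vec_index xq r = \<alpha> \<longrightarrow>
             ftilde d N D (Pstd d) (Qstd d) xq yq = g1 * (\<alpha> + real (d - 1) * \<beta>)) \<and>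
          (yq * vec_index xq r = -\<alpha> \<longrightarrow>
             ftilde d N D (Pstd d) (Qstd d) xq yq = g1 * (-\<alpha> + real (d - 1) * \<beta>)) \<and>
          (yq * vec_index xq r = -\<alpha> \<longrightarrow>
             ftilde d N D (Padv d) (Qadv d) xq yq
               \<le> g2 * (-(2*p - 1) * \<alpha>^2 + real (d - 1) * \<beta>^2))))"
proof -
  define K where "K = real (d - 1) * \<beta>^2"
  define C where "C = real (d - 1) * \<beta> + 1"
  define g1 where "g1 = (\<alpha> + C)^2 * p + (-\<alpha> + C)^2 * (1 - p)"
  define R where "R = -(2*p - 1) * \<alpha>^2 + K"
  define L where "L = (\<alpha> + C) * (K - \<alpha>^2) * p + (-\<alpha> + C) * (\<alpha>^2 + K) * (1 - p)"
  define g2 where "g2 = (if R > 0 then (\<bar>L\<bar> + 1) / R else if R < 0 \<and> L < 0 then L / R else 1)"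
  have K0: "K \<ge> 0" unfolding K_def using assms by simp
  have C0: "C \<ge> 1" unfolding C_def using assms by simp
  have g1pos: "g1 > 0"
  proof -
    have e: "g1 = (-\<alpha> + C)^2 + p * (4 * \<alpha> * C)"
      unfolding g1_def by (simp add: algebra_simps power2_eq_square)
    have "p * (4 * \<alpha> * C) > 0" using assms C0 by simp
    thus ?thesis unfolding e by (simp add: add_nonneg_pos)
  qed
  have g2pos: "g2 > 0"
    unfolding g2_def by (auto simp: divide_pos_pos divide_neg_neg)
  show ?thesis
  proof (rule exI[of _ g1], rule exI[of _ g2], intro conjI g1pos g2pos allI impI)
    fix N :: nat and D :: "(real Matrix.vec \<times> real) pmf" and r :: nat
    assume N: "N \<ge> 1" and r: "r < d"
      and hy: "\<forall>(x,y)\<in>set_pmf D. dim_vec x = d \<and> y \<in> {-1, 1}"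
      and half: "measure_pmf.prob D {z. snd z = 1} = 1/2"
      and pa: "measure_pmf.prob D {z. snd z * vec_index (fst z) r = \<alpha>} = p"
      and pb: "measure_pmf.prob D {z. snd z * vec_index (fst z) r = -\<alpha>} = 1 - p"
      and hb: "\<forall>(x,y)\<in>set_pmf D. \<forall>i<d. i \<noteq> r \<longrightarrow> y * vec_index x i = \<beta>"
    have p1: "p \<le> 1" using pa measure_pmf.prob_le_1[of D] by metis
    have ne: "\<alpha> \<noteq> -\<alpha>" using assms by simp
    have yz: "snd z \<in> {-1,1}" if "z \<in> set_pmf D" for z using hy that by (cases z) auto
    have bz: "\<forall>i<d. i \<noteq> r \<longrightarrow> snd z * fst z $ i = \<beta>" if "z \<in> set_pmf D" for z
      using hb that by (cases z) auto
    have csz: "cs d z = snd z * (snd z * fst z $ r + C)" if "z \<in> set_pmf D" for z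
      unfolding cs_def C_def using sumx[OF r yz[OF that] bz[OF that]] by (simp add: algebra_simps)
    have main: "(yq * vec_index xq r = \<alpha> \<longrightarrow>
             ftilde d N D (Pstd d) (Qstd d) xq yq = g1 * (\<alpha> + real (d - 1) * \<beta>)) \<and>
          (yq * vec_index xq r = -\<alpha> \<longrightarrow>
             ftilde d N D (Pstd d) (Qstd d) xq yq = g1 * (-\<alpha> + real (d - 1) * \<beta>)) \<and>
          (yq * vec_index xq r = -\<alpha> \<longrightarrow>
             ftilde d N D (Padv d) (Qadv d) xq yq
               \<le> g2 * (-(2*p - 1) * \<alpha>^2 + real (d - 1) * \<beta>^2))" if q: "(xq, yq) \<in> set_pmf D" for xq yq
    proof (intro conjI impI)
      have yq: "yq \<in> {-1,1}" using yz[OF q] by simp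
      have bq: "\<forall>i<d. i \<noteq> r \<longrightarrow> yq * xq $ i = \<beta>" using bz[OF q] by simp
      define sq where "sq = yq * xq $ r"
      have std: "ftilde d N D (Pstd d) (Qstd d) xq yq = g1 * (sq + real (d - 1) * \<beta>)"
      proof -
        let ?h = "\<lambda>z. (cs d z)^2"
        have sxq: "yq * (\<Sum>j<d. xq $ j) = sq + real (d - 1) * \<beta>"
          using sumx[OF r yq bq] sq1[OF yq] unfolding sq_def
          by (simp add: mult.assoc[symmetric])
        have two: "integrable (measure_pmf D) ?h \<and> measure_pmf.expectation D ?h = (\<alpha> + C)^2 * p + (-\<alpha> + C)^2 * (1 - p)"
        proof (rule expect_two[OF ne pa pb])
          fix z assume z: "z \<in> set_pmf D" and s: "snd z * fst z $ r = \<alpha>"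
          have "(cs d z)^2 = (snd z * snd z) * (snd z * fst z $ r + C)^2"
            using csz[OF z] by (simp add: power2_eq_square algebra_simps)
          thus "(cs d z)^2 = (\<alpha> + C)^2" using s sq1[OF yz[OF z]] by simp
        next
          fix z assume z: "z \<in> set_pmf D" and s: "snd z * fst z $ r = -\<alpha>"
          have "(cs d z)^2 = (snd z * snd z) * (snd z * fst z $ r + C)^2"
            using csz[OF z] by (simp add: power2_eq_square algebra_simps)
          thus "(cs d z)^2 = (-\<alpha> + C)^2" using s sq1[OF yz[OF z]] by simp
        qed simp
        have "ftilde d N D (Pstd d) (Qstd d) xq yq =
          measure_pmf.expectation (Pi_pmf {..<N} undefined (\<lambda>_. D))
            (\<lambda>S. (yq * (\<Sum>j<d. xq $ j)) * (1 / real N * (\<Sum>m<N. ?h (S m))))"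
          unfolding ftilde_def entry_std by (simp add: algebra_simps)
        also have "\<dots> = (yq * (\<Sum>j<d. xq $ j)) * measure_pmf.expectation D ?h"
          using two N by (intro expect_Pi) auto
        finally show ?thesis using two sxq g1_def by simp
      qed
      show "ftilde d N D (Pstd d) (Qstd d) xq yq = g1 * (\<alpha> + real (d - 1) * \<beta>)" if "yq * xq $ r = \<alpha>"
        using std sq_def that by simp
      show "ftilde d N D (Pstd d) (Qstd d) xq yq = g1 * (-\<alpha> + real (d - 1) * \<beta>)" if "yq * xq $ r = -\<alpha>"
        using std sq_def that by simp
      assume sqa: "yq * xq $ r = -\<alpha>"
      let ?h = "\<lambda>z. cs d z * (yq * (\<Sum>j<d. fst z $ j * xq $ j))"
      have hz: "?h z = (snd z * fst z $ r + C) * ((snd z * fst z $ r) * (-\<alpha>) + K)" if z: "z \<in> set_pmf D" for z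
      proof -
        have "?h z = snd z * (snd z * fst z $ r + C) * (yq * (snd z * yq * ((snd z * fst z $ r) * (yq * xq $ r) + real (d - 1) * \<beta>^2)))"
          using csz[OF z] sumxx[OF r yz[OF z] bz[OF z] yq bq] by simp
        also have "\<dots> = (snd z * snd z) * (yq * yq) * ((snd z * fst z $ r + C) * ((snd z * fst z $ r) * (yq * xq $ r) + K))"
          unfolding K_def by (simp add: algebra_simps)
        finally show ?thesis using sq1[OF yz[OF z]] sq1[OF yq] sqa by simp
      qed
      have two: "integrable (measure_pmf D) ?h \<and> measure_pmf.expectation D ?h = L"
      proof -
        have "integrable (measure_pmf D) ?h \<and> measure_pmf.expectation D ?h =
           ((\<alpha> + C) * (K - \<alpha>^2)) * p + ((-\<alpha> + C) * (\<alpha>^2 + K)) * (1 - p)"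
        proof (rule expect_two[OF ne pa pb])
          fix z assume z: "z \<in> set_pmf D" and s: "snd z * fst z $ r = \<alpha>"
          show "?h z = (\<alpha> + C) * (K - \<alpha>^2)" using hz[OF z] s by (simp add: power2_eq_square)
        next
          fix z assume z: "z \<in> set_pmf D" and s: "snd z * fst z $ r = -\<alpha>"
          show "?h z = (-\<alpha> + C) * (\<alpha>^2 + K)" using hz[OF z] s by (simp add: power2_eq_square)
        qed simp
        thus ?thesis unfolding L_def by simp
      qed
      have "ftilde d N D (Padv d) (Qadv d) xq yq =
          measure_pmf.expectation (Pi_pmf {..<N} undefined (\<lambda>_. D))
            (\<lambda>S. 1 * (1 / real N * (\<Sum>m<N. ?h (S m))))"
        unfolding ftilde_def entry_adv by (simp add: sum_distrib_left algebra_simps)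
      also have "\<dots> = L"
        using two N expect_Pi[of D ?h N undefined 1] by simp
      also have "L \<le> g2 * R"
        unfolding g2_def using ineq_part[OF assms(2) K0 _ assms(4) p1 R_def L_def] C0 by simp
      finally show "ftilde d N D (Padv d) (Qadv d) xq yq \<le> g2 * (-(2*p - 1) * \<alpha>^2 + real (d - 1) * \<beta>^2)"
        unfolding R_def K_def .
    qed
    show "\<forall>(xq,yq)\<in>set_pmf D.
          (yq * vec_index xq r = \<alpha> \<longrightarrow>
             ftilde d N D (Pstd d) (Qstd d) xq yq = g1 * (\<alpha> + real (d - 1) * \<beta>)) \<and>
          (yq * vec_index xq r = -\<alpha> \<longrightarrow>
             ftilde d N D (Pstd d) (Qstd d) xq yq = g1 * (-\<alpha> + real (d - 1) * \<beta>)) \<and>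
          (yq * vec_index xq r = -\<alpha> \<longrightarrow>
             ftilde d N D (Padv d) (Qadv d) xq yq
               \<le> g2 * (-(2*p - 1) * \<alpha>^2 + real (d - 1) * \<beta>^2))"
      using main by blast
  qed
qed

end
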